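(* Let $\varphi(\bm x,\bm y,\bm z)$ be the conjunction $\bigwedge_{i=1}^n \bm r_i^\top\bm x<\bm s_i^\top\bm y+\bm t_i^\top\bm z+h_i\ \wedge\ \bigwedge_{j=1}^m \bm u_j^\top\bm x\approx^j_{e_j}\bm v_j^\top\bm y+\bm w_j^\top\bm z+d_j$ as in the context, and let $\bm c$ be an integer vector. Then $\exists^{\mathsf{ram}}\bm x,\bm y\colon\varphi(\bm x,\bm y,\bm c)$ holds over $\mathbb{Z}$ if and only if there exists an admissible profile $\bm p\in\mathbb{Z}_\omega^{2n}$ such that some sequence is compatible with $\bm p$ for $\bm c$.
   Context: All vectors $\bm r_i,\bm s_i,\bm t_i,\bm u_j,\bm v_j,\bm w_j$ are integer vectors, $h_i,d_j\in\mathbb{Z}$, $e_j>0$, and each $\approx^j_{e_j}$ is either $\equiv_{e_j}$ or $\not\equiv_{e_j}$, where $s\equiv_e t$ means $e\mid s-t$. Let $\mathbb{Z}_\omega=\mathbb{Z}\cup\{\omega\}$ with $\omega$ larger than all integers. A profile is a vector $\bm p=(p_1,\dots,p_{2n})\in\mathbb{Z}_\omega^{2n}$. For an integer vector $\bm c$, a sequence $\bm a_1,\bm a_2,\dots$ of pairwise distinct integer vectors is compatible with $\bm p$ for $\bm c$ if for all $k<\ell$ and all $j$, $\bm u_j^\top\bm a_k\approx^j_{e_j}\bm v_j^\top\bm a_\ell+\bm w_j^\top\bm c+d_j$, and for all $i\in[1,n]$: $\sup\{\bm r_i^\top\bm a_k\mid k\ge1\}\le p_{2i-1}$ and $p_{2i}\le\liminf\{\bm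 s_i^\top\bm a_k+\bm t_i^\top\bm c+h_i\mid k\ge1\}$ (where sup/liminf equal to $+\infty$ is identified with $\omega$). A profile is admissible if for every $i\in[1,n]$, $p_{2i-1}<p_{2i}$ or $p_{2i}=\omega$. Ramsey quantifier: $\exists^{\mathsf{ram}}\bm x,\bm y\colon\varphi(\bm x,\bm y,\bm c)$ holds iff there is an infinite sequence of pairwise distinct integer vectors $(\bm a_i)_{i\ge1}$ with $\varphi(\bm a_i,\bm a_j,\bm c)$ for all $i<j$. *)

theory Defs
  imports "HOL-Analysis.Analysis" "HOL-Library.Extended_Real"
begin

definition idot :: "int ^ 'd \<Rightarrow> int ^ 'd \<Rightarrow> int" where
  "idot r a = (\<Sum>i\<in>UNIV. r $ i * a $ i)"

definition approx_rel :: "bool \<Rightarrow> int \<Rightarrow> int \<Rightarrow> int \<Rightarrow> bool" where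
  "approx_rel iscong e s t = (if iscong then e dvd (s - t) else \<not> e dvd (s - t))"

datatype zomega = Fin int | Omega

fun zo :: "zomega \<Rightarrow> ereal" where
  "zo (Fin k) = ereal (of_int k)"
| "zo Omega = \<infinity>"

definition phi ::
  "nat \<Rightarrow> (nat \<Rightarrow> int ^ 'd) \<Rightarrow> (nat \<Rightarrow> int ^ 'd) \<Rightarrow> (nat \<Rightarrow> int ^ 'k) \<Rightarrow> (nat \<Rightarrow> int) \<Rightarrow>
   nat \<Rightarrow> (nat \<Rightarrow> int ^ 'd) \<Rightarrow> (nat \<Rightarrow> int ^ 'd) \<Rightarrow> (nat \<Rightarrow> int ^ 'k) \<Rightarrow> (nat \<Rightarrow> int) \<Rightarrow>
   (nat \<Rightarrow> int) \<Rightarrow> (nat \<Rightarrow> bool) \<Rightarrow>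
   int ^ 'd \<Rightarrow> int ^ 'd \<Rightarrow> int ^ 'k \<Rightarrow> bool" where
  "phi n r s t h m u v w d e cg x y z \<longleftrightarrow>
     (\<forall>i\<in>{1..n}. idot (r i) x < idot (s i) y + idot (t i) z + h i) \<and>
     (\<forall>j\<in>{1..m}. approx_rel (cg j) (e j) (idot (u j) x) (idot (v j) y + idot (w j) z + d j))"

definition ramsey_exists :: "(int ^ 'd \<Rightarrow> int ^ 'd \<Rightarrow> bool) \<Rightarrow> bool" where
  "ramsey_exists P \<longleftrightarrow> (\<exists>a :: nat \<Rightarrow> int ^ 'd. inj a \<and> (\<forall>i j. i < j \<longrightarrow> P (a i) (a j)))"

definition admissible :: "nat \<Rightarrow> (nat \<Rightarrow> zomega) \<Rightarrow> bool" where
  "admissible n p \<longleftrightarrow>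
     (\<forall>i\<in>{1..n}. zo (p (2*i - 1)) < zo (p (2*i)) \<or> p (2*i) = Omega)"

text \<open>Compatibility of a sequence with a profile for c. Sup and liminf are taken in the
  extended reals, where +infinity plays the role of omega.\<close>
definition compatible ::
  "nat \<Rightarrow> (nat \<Rightarrow> int ^ 'd) \<Rightarrow> (nat \<Rightarrow> int ^ 'd) \<Rightarrow> (nat \<Rightarrow> int ^ 'k) \<Rightarrow> (nat \<Rightarrow> int) \<Rightarrow>
   nat \<Rightarrow> (nat \<Rightarrow> int ^ 'd) \<Rightarrow> (nat \<Rightarrow> int ^ 'd) \<Rightarrow> (nat \<Rightarrow> int ^ 'k) \<Rightarrow> (nat \<Rightarrow> int) \<Rightarrow>
   (nat \<Rightarrow> int) \<Rightarrow> (nat \<Rightarrow> bool) \<Rightarrow>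
   int ^ 'k \<Rightarrow> (nat \<Rightarrow> zomega) \<Rightarrow> (nat \<Rightarrow> int ^ 'd) \<Rightarrow> bool" where
  "compatible n r s t h m u v w d e cg c p a \<longleftrightarrow>
     inj a \<and>
     (\<forall>k l. k < l \<longrightarrow> (\<forall>j\<in>{1..m}.
        approx_rel (cg j) (e j) (idot (u j) (a k)) (idot (v j) (a l) + idot (w j) c + d j))) \<and>
     (\<forall>i\<in>{1..n}.
        (SUP k. ereal (of_int (idot (r i) (a k)))) \<le> zo (p (2*i - 1)) \<and>
        zo (p (2*i)) \<le> liminf (\<lambda>k. ereal (of_int (idot (s i) (a k) + idot (t i) c + h i))))"

end

theory Submission
  imports Defs
begin

lemma int_Sup_attained:
  fixes X :: "int set"
  assumes "X \<noteq> {}" "bdd_above X"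
  shows "Sup X \<in> X"
proof -
  have "Sup X - 1 < Sup X" by simp
  then obtain x where x: "x \<in> X" "Sup X - 1 < x" using less_cSupE[OF _ assms(1)] by blast
  have "x \<le> Sup X" using cSup_upper[OF x(1) assms(2)] .
  with x have "x = Sup X" by linarith
  with x show ?thesis by simp
qed

lemma subseq_construct:
  fixes Q :: "nat \<Rightarrow> nat \<Rightarrow> bool"
  assumes ev: "\<And>k. \<exists>N. \<forall>l\<ge>N. Q k l"
  shows "\<exists>f::nat\<Rightarrow>nat. strict_mono f \<and> (\<forall>k l. k < l \<longrightarrow> Q (f k) (f l))"
proof -
  define N where "N k = (SOME N. \<forall>l\<ge>N. Q k l)" for k
  have N: "Q k l" if "l \<ge> N k" for k l
  proof -
    have "\<forall>l\<ge>N k. Q k l" unfolding N_def by (rule someI_ex[OF ev])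
    with that show ?thesis by simp
  qed
  define M where "M n = Max (N ` {..n})" for n
  have NM: "N k \<le> M n" if "k \<le> n" for k n
    unfolding M_def using that by (intro Max_ge) auto
  define f where "f = rec_nat 0 (\<lambda>_ x. max (Suc x) (M x))"
  have f0: "f 0 = 0" and fS: "\<And>n. f (Suc n) = max (Suc (f n)) (M (f n))"
    by (simp_all add: f_def)
  have sm: "strict_mono f"
    unfolding strict_mono_Suc_iff fS by (simp add: less_max_iff_disj)
  have Qf: "Q (f k) (f l)" if kl: "k < l" for k l
  proof -
    obtain l' where l': "l = Suc l'" using kl by (cases l) (auto)
    have "k \<le> l'" using kl l' by simp
    then have "f k \<le> f l'" using sm strict_mono_less_eq by blast
    then have "N (f k) \<le> M (f l')" by (rule NM)
    also have "\<dots> \<le> f l" unfolding l' fS by (rule max.cobounded2)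
    finally show ?thesis by (rule N)
  qed
  have A: "\<forall>k l. k < l \<longrightarrow> Q (f k) (f l)" by (intro allI impI Qf)
  show ?thesis by (rule exI[where x=f], rule conjI[OF sm A])
qed

theorem mainTheorem7:
  fixes n m :: nat
    and r s u v :: "nat \<Rightarrow> int ^ 'd"
    and t w :: "nat \<Rightarrow> int ^ 'k"
    and h d e :: "nat \<Rightarrow> int"
    and cg :: "nat \<Rightarrow> bool"
    and c :: "int ^ 'k"
  assumes "\<forall>j\<in>{1..m}. e j > 0"
  shows "ramsey_exists (\<lambda>x y. phi n r s t h m u v w d e cg x y c) \<longleftrightarrow>
         (\<exists>p. admissible n p \<and> (\<exists>a. compatible n r s t h m u v w d e cg c p a))"
proof
  assume "ramsey_exists (\<lambda>x y. phi n r s t h m u v w d e cg x y c)"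
  then obtain a :: "nat \<Rightarrow> int ^ 'd" where inj: "inj a" and ph: "\<And>i j. i < j \<Longrightarrow> phi n r s t h m u v w d e cg (a i) (a j) c"
    unfolding ramsey_exists_def by blast
  define R where "R i k = idot (r i) (a k)" for i k
  define S where "S i k = idot (s i) (a k) + idot (t i) c + h i" for i k
  have RS: "R i k < S i l" if "i \<in> {1..n}" "k < l" for i k l
    using ph[OF that(2)] that(1) unfolding phi_def R_def S_def by auto
  define B where "B i = bdd_above (range (R i))" for i
  define M where "M i = Sup (range (R i))" for i
  define p where "p j = (let i = (j + 1) div 2 in if B i then (if odd j then Fin (M i) else Fin (M i + 1)) else Omega)" for j
  have p1: "p (2*i - 1) = (if B i then Fin (M i) else Omega)" if "i \<ge> 1" for i
  proof -
    have "(2*i - 1 + 1) div 2 = i" "odd (2*i - 1)" using that by auto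
    then show ?thesis unfolding p_def Let_def by simp
  qed
  have p2: "p (2*i) = (if B i then Fin (M i + 1) else Omega)" for i
  proof -
    have "(2*i + 1) div 2 = i" by auto
    then show ?thesis unfolding p_def Let_def by simp
  qed
  have adm: "admissible n p"
    unfolding admissible_def using p1 p2 by auto
  have apx: "approx_rel (cg j) (e j) (idot (u j) (a k)) (idot (v j) (a l) + idot (w j) c + d j)"
    if "k < l" "j \<in> {1..m}" for k l j
      using ph[of k l] that unfolding phi_def by auto
  have key: "(SUP k. ereal (of_int (idot (r i) (a k)))) \<le> zo (p (2*i - 1)) \<and>
        zo (p (2*i)) \<le> liminf (\<lambda>k. ereal (of_int (idot (s i) (a k) + idot (t i) c + h i)))"
    if i: "i \<in> {1..n}" for i
    proof (cases "B i")
      case True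
      have mem: "M i \<in> range (R i)" unfolding M_def
        using True B_def by (intro int_Sup_attained) auto
      then obtain k0 where k0: "R i k0 = M i" by auto
      have ub: "R i k \<le> M i" for k unfolding M_def using True B_def by (intro cSup_upper) auto
      have "(SUP k. ereal (of_int (R i k))) \<le> ereal (of_int (M i))"
        by (rule SUP_least) (use ub in simp)
      moreover have "ereal (of_int (M i + 1)) \<le> liminf (\<lambda>k. ereal (of_int (S i k)))"
      proof (rule Liminf_bounded)
        show "\<forall>\<^sub>F l in sequentially. ereal (of_int (M i + 1)) \<le> ereal (of_int (S i l))"
          unfolding eventually_sequentially
        proof (intro exI[of _ "Suc k0"] allI impI)
          fix l assume "Suc k0 \<le> l"
          then have "R i k0 < S i l" using RS[OF i] by simp
          with k0 have "M i + 1 \<le> S i l" by simp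
          then show "ereal (of_int (M i + 1)) \<le> ereal (of_int (S i l))" by simp
        qed
      qed
      ultimately show ?thesis using p1 p2 True i unfolding R_def S_def by simp
    next
      case False
      have "liminf (\<lambda>k. ereal (of_int (S i k))) = \<infinity>"
      proof (rule ereal_top)
        fix b :: real
        obtain k where k: "R i k > \<lceil>b\<rceil>" using False unfolding B_def bdd_above_def
          by (metis not_le rangeE rangeI)
        show "ereal b \<le> liminf (\<lambda>k. ereal (of_int (S i k)))"
        proof (rule Liminf_bounded)
          show "\<forall>\<^sub>F l in sequentially. ereal b \<le> ereal (of_int (S i l))"
            unfolding eventually_sequentially
          proof (intro exI[of _ "Suc k"] allI impI)
            fix l assume "Suc k \<le> l"
            then have "R i k < S i l" using RS[OF i] by simp
            with k have "b \<le> of_int (S i l)" by linarith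
            then show "ereal b \<le> ereal (of_int (S i l))" by simp
          qed
        qed
      qed
      then show ?thesis using p1 p2 False i unfolding R_def S_def by simp
    qed
  have comp: "compatible n r s t h m u v w d e cg c p a"
    unfolding compatible_def using inj apx key by blast
  from adm comp show "\<exists>p. admissible n p \<and> (\<exists>a. compatible n r s t h m u v w d e cg c p a)" by blast
next
  assume "\<exists>p. admissible n p \<and> (\<exists>a. compatible n r s t h m u v w d e cg c p a)"
  then obtain p a where adm: "admissible n p" and comp: "compatible n r s t h m u v w d e cg c p a" by blast
  define R where "R i k = idot (r i) (a k)" for i k
  define S where "S i k = idot (s i) (a k) + idot (t i) c + h i" for i k
  have inj: "inj a" using comp unfolding compatible_def by blast
  have cong: "\<And>k l j. k < l \<Longrightarrow> j \<in> {1..m} \<Longrightarrow>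
      approx_rel (cg j) (e j) (idot (u j) (a k)) (idot (v j) (a l) + idot (w j) c + d j)"
    using comp unfolding compatible_def by blast
  have ev1: "\<forall>\<^sub>F l in sequentially. R i k < S i l" if i: "i \<in> {1..n}" for i k
  proof -
    have sup: "(SUP k. ereal (of_int (R i k))) \<le> zo (p (2*i - 1))"
      and lim: "zo (p (2*i)) \<le> liminf (\<lambda>k. ereal (of_int (S i k)))"
      using comp i unfolding compatible_def R_def S_def by auto
    have "ereal (of_int (R i k)) \<le> (SUP k. ereal (of_int (R i k)))" by (rule SUP_upper) simp
    then have le: "ereal (of_int (R i k)) \<le> zo (p (2*i - 1))" using sup by (rule order_trans)
    have "ereal (of_int (R i k)) < zo (p (2*i))"
    proof (cases "p (2*i) = Omega")
      case True then show ?thesis by simp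
    next
      case False
      with adm i have "zo (p (2*i - 1)) < zo (p (2*i))" unfolding admissible_def by auto
      with le show ?thesis by (rule le_less_trans)
    qed
    then have "ereal (of_int (R i k)) < liminf (\<lambda>k. ereal (of_int (S i k)))" using lim by (rule less_le_trans)
    from less_LiminfD[OF this] show ?thesis by simp
  qed
  have "\<exists>N. \<forall>l\<ge>N. \<forall>i\<in>{1..n}. R i k < S i l" for k
  proof -
    have "\<forall>\<^sub>F l in sequentially. \<forall>i\<in>{1..n}. R i k < S i l"
      using ev1 by (intro eventually_ball_finite) auto
    then show ?thesis unfolding eventually_sequentially .
  qed
  from subseq_construct[of "\<lambda>k l. \<forall>i\<in>{1..n}. R i k < S i l", OF this] obtain f :: "nat \<Rightarrow> nat" where f: "strict_mono f"
    and Q': "\<forall>k l. k < l \<longrightarrow> (\<forall>i\<in>{1..n}. R i (f k) < S i (f l))" by blast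
  show "ramsey_exists (\<lambda>x y. phi n r s t h m u v w d e cg x y c)"
    unfolding ramsey_exists_def
  proof (intro exI conjI allI impI)
    show "inj (a \<circ> f)" using inj f by (simp add: inj_compose strict_mono_imp_inj_on)
    fix i j :: nat assume ij: "i < j"
    have "f i < f j" using f ij by (simp add: strict_mono_less)
    have c1: "\<forall>i'\<in>{1..n}. idot (r i') (a (f i)) < idot (s i') (a (f j)) + idot (t i') c + h i'"
      using Q' ij unfolding R_def S_def by blast
    have c2: "\<forall>j'\<in>{1..m}. approx_rel (cg j') (e j') (idot (u j') (a (f i))) (idot (v j') (a (f j)) + idot (w j') c + d j')"
      using cong[OF \<open>f i < f j\<close>] by blast
    show "phi n r s t h m u v w d e cg ((a \<circ> f) i) ((a \<circ> f) j) c"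
      unfolding phi_def o_def using c1 c2 by blast
  qed
qed

end
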